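(* Let $\mathcal{E}=(\mathbf{R},\mathbf{S},\Sigma_{st},\mathbf{F})$ be a consistent constructive relational to RDF data exchange setting, $I$ a consistent instance of $\mathbf{R}$, $E$ a forward nested regular expression, and $\mathcal{U}$ a universal simulation solution for $I$ w.r.t. $\mathcal{E}$. A pair $(n,m)$ is a certain answer to $E$ in $I$ w.r.t. $\mathcal{E}$ if and only if $(n,m)\in[\![E]\!]_{\mathcal{U}}$ and neither $n$ nor $m$ is a null value.
   Context: Values: $\mathsf{Iri}$ (IRIs, containing predicates $\mathsf{Pred}$), $\mathsf{NullIri}$, $\mathsf{Lit}$ with null literals $\mathsf{NullLit}\subseteq\mathsf{Lit}$; null values are those in $\mathsf{NullLit}\cup\mathsf{NullIri}$. $\mathbf{R}=(\mathcal{R},\Sigma_{fd})$: relation names with arities and functional dependencies; an instance assigns finite sets of tuples of non-null literals; consistent instances satisfy $\Sigma_{fd}$. Typed graph: finite set of triples $(s,p,o)$, $s\in\mathsf{Iri}\cup\mathsf{NullIri}$, $p\in\mathsf{Pred}$, $o\in\mathsf{Iri}\cup\mathsf{NullIri}\cup\mathsf{Lit}$, with type facts $T(n)$ ($T\in\mathcal{T}$), $\mathit{Literal}(n)$. Deterministic shape schema $\mathbf{S}=(\mathcal{T},\delta)$: partial $\delta:\mathcal{T}\times\mathsf{Pred}\to(\mathcal{T}\cup\{\mathit{Literal}\})\times\{1,?,*,+\}$; satisfaction: for each $\delta(T,p)=S^\mu$, $p$-successors of $T$-typed nodes have type $S$, at most one if $\mu\in\{1,?\}$, at least one if $\mu\in\{1,+\}$.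 Constructive setting: IRI constructors $f\in\mathcal{F}$ interpreted as $f^F:\mathsf{Lit}^n\to\mathsf{Iri}$ (constants) with pairwise disjoint ranges; full st-tgds $\forall\bar x.\,\varphi\Rightarrow\psi$, $\varphi$ over $\mathcal{R}$, $\psi$ a conjunction of atoms $\mathit{Triple}(t_1,p,t_2)$, $T(t)$, $\mathit{Literal}(t)$, terms variables or $f(\bar u)$. Solution for $I$: typed graph satisfying $\mathbf{S}$ and, together with $I$, $\Sigma_{st}$; $\mathcal{E}$ consistent if each consistent instance has one. Simulation: relation $R$ between nodes of $G$ and $H$ such that for $(n,m)\in R$: $n$ literal iff $m$ literal; if $n$ non-null then $n=m$; each edge $(n,p,n')\in G$ matched by some $(m,p,m')\in H$ with $(n',m')\in R$; $G$ simulated by $H$ if every node of $G$ is related to some node of $H$. A universal simulation solution for $I$: a solution simulated by every solution for $I$. Forward NREs: $E::=\epsilon\mid p\mid\Box\mid\langle\ell\rangle\mid[E]\mid E^*\mid E\cdot E\mid E+E$ with semantics: identity on nodes, $p$-edges, all edges, $\{(\ell,\ell)\}$ if $\ell$ is a node, $\{(n,n)\mid\exists m.(n,m)\in[\![E]\!]_G\}$, union, composition, reflexive-transitive closure. $(n,m)$ is a certain answer to $E$ in $I$ w.r.t. $\mathcal{E}$ iff $(n,m)\in[\![E]\!]_J$ for every solution $J$ for $I$. *)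

theory Defs
  imports Main
begin

text \<open>Nulls are indexed by naturals (infinite supply).\<close>

datatype ('i, 'l) node = Iri 'i | NullIri nat | Lit 'l | NullLit nat

fun is_literal :: "('i, 'l) node \<Rightarrow> bool" where
  "is_literal (Lit _) = True"
| "is_literal (NullLit _) = True"
| "is_literal _ = False"

fun is_null :: "('i, 'l) node \<Rightarrow> bool" where
  "is_null (NullIri _) = True"
| "is_null (NullLit _) = True"
| "is_null _ = False"

datatype 'T stype = STy 'T | SLiteral

datatype mult = MOne | MOpt | MStar | MPlus

record ('i, 'l, 'T) tgraph =
  triples :: "(('i, 'l) node \<times> 'i \<times> ('i, 'l) node) set"
  tfacts :: "(('i, 'l) node \<times> 'T) set"
  lfacts :: "('i, 'l) node set"

definition nodes :: "('i, 'l, 'T) tgraph \<Rightarrow> ('i, 'l) node set" where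
  "nodes G = {s. \<exists>p ob. (s, p, ob) \<in> triples G} \<union> {ob. \<exists>s p. (s, p, ob) \<in> triples G}
             \<union> fst ` tfacts G \<union> lfacts G"

definition wf_tgraph :: "'i set \<Rightarrow> ('i, 'l, 'T) tgraph \<Rightarrow> bool" where
  "wf_tgraph Pred G \<longleftrightarrow> finite (triples G) \<and> finite (tfacts G) \<and> finite (lfacts G)
     \<and> (\<forall>s p ob. (s, p, ob) \<in> triples G \<longrightarrow> \<not> is_literal s \<and> p \<in> Pred)
     \<and> (\<forall>n \<in> lfacts G. is_literal n)"

fun has_type :: "('i, 'l, 'T) tgraph \<Rightarrow> ('i, 'l) node \<Rightarrow> 'T stype \<Rightarrow> bool" where
  "has_type G n (STy T) = ((n, T) \<in> tfacts G)"
| "has_type G n SLiteral = (n \<in> lfacts G)"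

definition sat_schema ::
  "('T \<Rightarrow> 'i \<Rightarrow> ('T stype \<times> mult) option) \<Rightarrow> ('i, 'l, 'T) tgraph \<Rightarrow> bool" where
  "sat_schema \<delta> G \<longleftrightarrow> (\<forall>T p S \<mu>. \<delta> T p = Some (S, \<mu>) \<longrightarrow>
     (\<forall>n. (n, T) \<in> tfacts G \<longrightarrow>
        (\<forall>m. (n, p, m) \<in> triples G \<longrightarrow> has_type G m S)
      \<and> (\<mu> \<in> {MOne, MOpt} \<longrightarrow> (\<forall>m m'. (n, p, m) \<in> triples G \<longrightarrow> (n, p, m') \<in> triples G \<longrightarrow> m = m'))
      \<and> (\<mu> \<in> {MOne, MPlus} \<longrightarrow> (\<exists>m. (n, p, m) \<in> triples G))))"

datatype ('f, 'v) sterm = Var 'v | Fn 'f "'v list"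

datatype ('i, 'f, 'v, 'T) hatom =
    TripleA "('f, 'v) sterm" 'i "('f, 'v) sterm"
  | TypeA 'T "('f, 'v) sterm"
  | LitA "('f, 'v) sterm"

type_synonym ('r, 'v) batom = "'r \<times> 'v list"

type_synonym ('r, 'i, 'f, 'v, 'T) tgd = "('r, 'v) batom list \<times> ('i, 'f, 'v, 'T) hatom list"

text \<open>Setting: relational schema (arities, functional dependencies X -> Y on attribute positions),
  predicate set, shape schema delta (types = the whole type 'T), finite set of full st-tgds,
  IRI constructors with arities and their interpretation.\<close>
record ('r, 'i, 'l, 'T, 'f, 'v) setting =
  rel_arity :: "'r \<Rightarrow> nat"
  fds :: "('r \<times> nat set \<times> nat set) set"
  preds :: "'i set"
  delta :: "'T \<Rightarrow> 'i \<Rightarrow> ('T stype \<times> mult) option"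
  sttgds :: "('r, 'i, 'f, 'v, 'T) tgd set"
  cons_arity :: "'f \<Rightarrow> nat"
  cons_interp :: "'f \<Rightarrow> 'l list \<Rightarrow> 'i"

fun sterm_vars :: "('f, 'v) sterm \<Rightarrow> 'v set" where
  "sterm_vars (Var x) = {x}"
| "sterm_vars (Fn f us) = set us"

fun sterm_wf :: "('f \<Rightarrow> nat) \<Rightarrow> ('f, 'v) sterm \<Rightarrow> bool" where
  "sterm_wf ar (Var x) = True"
| "sterm_wf ar (Fn f us) = (length us = ar f)"

fun hatom_vars :: "('i, 'f, 'v, 'T) hatom \<Rightarrow> 'v set" where
  "hatom_vars (TripleA t1 p t2) = sterm_vars t1 \<union> sterm_vars t2"
| "hatom_vars (TypeA T t) = sterm_vars t"
| "hatom_vars (LitA t) = sterm_vars t"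

fun hatom_wf :: "'i set \<Rightarrow> ('f \<Rightarrow> nat) \<Rightarrow> ('i, 'f, 'v, 'T) hatom \<Rightarrow> bool" where
  "hatom_wf Pred ar (TripleA t1 p t2) = (p \<in> Pred \<and> sterm_wf ar t1 \<and> sterm_wf ar t2)"
| "hatom_wf Pred ar (TypeA T t) = sterm_wf ar t"
| "hatom_wf Pred ar (LitA t) = sterm_wf ar t"

definition tgd_wf :: "('r, 'i, 'l, 'T, 'f, 'v) setting \<Rightarrow> ('r, 'i, 'f, 'v, 'T) tgd \<Rightarrow> bool" where
  "tgd_wf \<E> \<sigma> \<longleftrightarrow>
     (\<forall>(R, xs) \<in> set (fst \<sigma>). length xs = rel_arity \<E> R)
   \<and> (\<forall>a \<in> set (snd \<sigma>). hatom_wf (preds \<E>) (cons_arity \<E>) a)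
   \<and> (\<Union>a \<in> set (snd \<sigma>). hatom_vars a) \<subseteq> (\<Union>(R, xs) \<in> set (fst \<sigma>). set xs)"

definition wf_setting :: "('r, 'i, 'l, 'T, 'f, 'v) setting \<Rightarrow> bool" where
  "wf_setting \<E> \<longleftrightarrow>
     (\<forall>(R, X, Y) \<in> fds \<E>. X \<union> Y \<subseteq> {..<rel_arity \<E> R})
   \<and> finite (sttgds \<E>) \<and> (\<forall>\<sigma> \<in> sttgds \<E>. tgd_wf \<E> \<sigma>)
   \<and> (\<forall>T p. delta \<E> T p \<noteq> None \<longrightarrow> p \<in> preds \<E>)
   \<and> (\<forall>f g xs ys. f \<noteq> g \<longrightarrow> length xs = cons_arity \<E> f \<longrightarrow> length ys = cons_arity \<E> g
        \<longrightarrow> cons_interp \<E> f xs \<noteq> cons_interp \<E> g ys)"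

type_synonym ('r, 'l) rinstance = "'r \<Rightarrow> 'l list set"

definition is_instance :: "('r, 'i, 'l, 'T, 'f, 'v) setting \<Rightarrow> ('r, 'l) rinstance \<Rightarrow> bool" where
  "is_instance \<E> I \<longleftrightarrow> finite {R. I R \<noteq> {}} \<and>
     (\<forall>R. finite (I R) \<and> (\<forall>t \<in> I R. length t = rel_arity \<E> R))"

definition consistent_instance :: "('r, 'i, 'l, 'T, 'f, 'v) setting \<Rightarrow> ('r, 'l) rinstance \<Rightarrow> bool" where
  "consistent_instance \<E> I \<longleftrightarrow> is_instance \<E> I \<and>
     (\<forall>(R, X, Y) \<in> fds \<E>. \<forall>t \<in> I R. \<forall>t' \<in> I R.
        (\<forall>i \<in> X. t ! i = t' ! i) \<longrightarrow> (\<forall>i \<in> Y. t ! i = t' ! i))"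

fun eval_sterm :: "('f \<Rightarrow> 'l list \<Rightarrow> 'i) \<Rightarrow> ('v \<Rightarrow> 'l) \<Rightarrow> ('f, 'v) sterm \<Rightarrow> ('i, 'l) node" where
  "eval_sterm F \<nu> (Var x) = Lit (\<nu> x)"
| "eval_sterm F \<nu> (Fn f us) = Iri (F f (map \<nu> us))"

fun hatom_holds ::
  "('f \<Rightarrow> 'l list \<Rightarrow> 'i) \<Rightarrow> ('v \<Rightarrow> 'l) \<Rightarrow> ('i, 'l, 'T) tgraph \<Rightarrow> ('i, 'f, 'v, 'T) hatom \<Rightarrow> bool" where
  "hatom_holds F \<nu> J (TripleA t1 p t2) = ((eval_sterm F \<nu> t1, p, eval_sterm F \<nu> t2) \<in> triples J)"
| "hatom_holds F \<nu> J (TypeA T t) = ((eval_sterm F \<nu> t, T) \<in> tfacts J)"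
| "hatom_holds F \<nu> J (LitA t) = (eval_sterm F \<nu> t \<in> lfacts J)"

definition sat_tgd ::
  "('f \<Rightarrow> 'l list \<Rightarrow> 'i) \<Rightarrow> ('r, 'l) rinstance \<Rightarrow> ('i, 'l, 'T) tgraph \<Rightarrow> ('r, 'i, 'f, 'v, 'T) tgd \<Rightarrow> bool" where
  "sat_tgd F I J \<sigma> \<longleftrightarrow> (\<forall>\<nu>. (\<forall>(R, xs) \<in> set (fst \<sigma>). map \<nu> xs \<in> I R) \<longrightarrow>
                              (\<forall>a \<in> set (snd \<sigma>). hatom_holds F \<nu> J a))"

definition is_solution ::
  "('r, 'i, 'l, 'T, 'f, 'v) setting \<Rightarrow> ('r, 'l) rinstance \<Rightarrow> ('i, 'l, 'T) tgraph \<Rightarrow> bool" where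
  "is_solution \<E> I J \<longleftrightarrow> wf_tgraph (preds \<E>) J \<and> sat_schema (delta \<E>) J
     \<and> (\<forall>\<sigma> \<in> sttgds \<E>. sat_tgd (cons_interp \<E>) I J \<sigma>)"

definition consistent_setting :: "('r, 'i, 'l, 'T, 'f, 'v) setting \<Rightarrow> bool" where
  "consistent_setting \<E> \<longleftrightarrow> (\<forall>I. consistent_instance \<E> I \<longrightarrow> (\<exists>J. is_solution \<E> I J))"

definition is_simulation ::
  "(('i, 'l) node \<times> ('i, 'l) node) set \<Rightarrow> ('i, 'l, 'T) tgraph \<Rightarrow> ('i, 'l, 'T) tgraph \<Rightarrow> bool" where
  "is_simulation Rel G H \<longleftrightarrow> Rel \<subseteq> nodes G \<times> nodes H \<and>
     (\<forall>(n, m) \<in> Rel. (is_literal n \<longleftrightarrow> is_literal m) \<and> (\<not> is_null n \<longrightarrow> n = m)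
        \<and> (\<forall>p n'. (n, p, n') \<in> triples G \<longrightarrow> (\<exists>m'. (m, p, m') \<in> triples H \<and> (n', m') \<in> Rel)))"

definition simulated_by :: "('i, 'l, 'T) tgraph \<Rightarrow> ('i, 'l, 'T) tgraph \<Rightarrow> bool" where
  "simulated_by G H \<longleftrightarrow> (\<exists>Rel. is_simulation Rel G H \<and> (\<forall>n \<in> nodes G. \<exists>m. (n, m) \<in> Rel))"

definition universal_sim_solution ::
  "('r, 'i, 'l, 'T, 'f, 'v) setting \<Rightarrow> ('r, 'l) rinstance \<Rightarrow> ('i, 'l, 'T) tgraph \<Rightarrow> bool" where
  "universal_sim_solution \<E> I U \<longleftrightarrow> is_solution \<E> I U \<and> (\<forall>J. is_solution \<E> I J \<longrightarrow> simulated_by U J)"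

text \<open>Node tests range over constants (IRIs and non-null literals); queries do not mention nulls.\<close>
datatype ('i, 'l) const = CIri 'i | CLit 'l

fun const_node :: "('i, 'l) const \<Rightarrow> ('i, 'l) node" where
  "const_node (CIri i) = Iri i"
| "const_node (CLit l) = Lit l"

datatype ('i, 'l) nre =
    NEps
  | NPred 'i
  | NAny
  | NTest "('i, 'l) const"
  | NNest "('i, 'l) nre"
  | NStar "('i, 'l) nre"
  | NSeq "('i, 'l) nre" "('i, 'l) nre"
  | NAlt "('i, 'l) nre" "('i, 'l) nre"

fun nre_sem :: "('i, 'l) nre \<Rightarrow> ('i, 'l, 'T) tgraph \<Rightarrow> (('i, 'l) node \<times> ('i, 'l) node) set" where
  "nre_sem NEps G = Id_on (nodes G)"
| "nre_sem (NPred p) G = {(s, ob). (s, p, ob) \<in> triples G}"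
| "nre_sem NAny G = {(s, ob). \<exists>p. (s, p, ob) \<in> triples G}"
| "nre_sem (NTest c) G = (if const_node c \<in> nodes G then {(const_node c, const_node c)} else {})"
| "nre_sem (NNest E) G = {(n, n) | n. \<exists>m. (n, m) \<in> nre_sem E G}"
| "nre_sem (NStar E) G = Id_on (nodes G) \<union> (nre_sem E G)\<^sup>+"
| "nre_sem (NSeq E1 E2) G = nre_sem E1 G O nre_sem E2 G"
| "nre_sem (NAlt E1 E2) G = nre_sem E1 G \<union> nre_sem E2 G"

definition certain_answer ::
  "('r, 'i, 'l, 'T, 'f, 'v) setting \<Rightarrow> ('r, 'l) rinstance \<Rightarrow> ('i, 'l) nre
    \<Rightarrow> ('i, 'l) node \<Rightarrow> ('i, 'l) node \<Rightarrow> bool" where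
  "certain_answer \<E> I E n m \<longleftrightarrow>
     (\<forall>J :: ('i, 'l, 'T) tgraph. is_solution \<E> I J \<longrightarrow> (n, m) \<in> nre_sem E J)"

end

theory Submission
  imports Defs
begin

fun shiftn :: "nat \<Rightarrow> ('i, 'l) node \<Rightarrow> ('i, 'l) node" where
  "shiftn K (NullIri k) = NullIri (k + K)"
| "shiftn K (NullLit k) = NullLit (k + K)"
| "shiftn K x = x"

fun nidx :: "('i, 'l) node \<Rightarrow> nat" where
  "nidx (NullIri k) = k"
| "nidx (NullLit k) = k"
| "nidx _ = 0"

lemma shiftn_inj: "shiftn K x = shiftn K y \<Longrightarrow> x = y"
  by (cases x; cases y; auto)

lemma shiftn_lit: "is_literal (shiftn K x) = is_literal x"
  by (cases x; auto)

lemma shiftn_eval: "shiftn K (eval_sterm F \<nu> t) = eval_sterm F \<nu> t"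
  by (cases t; auto)

definition shiftg :: "nat \<Rightarrow> ('i, 'l, 'T) tgraph \<Rightarrow> ('i, 'l, 'T) tgraph" where
  "shiftg K G = \<lparr>triples = (\<lambda>(s, p, ob). (shiftn K s, p, shiftn K ob)) ` triples G,
                 tfacts = (\<lambda>(x, T). (shiftn K x, T)) ` tfacts G,
                 lfacts = shiftn K ` lfacts G\<rparr>"

lemma shiftg_triples: "(shiftn K s, p, shiftn K ob) \<in> triples (shiftg K G) \<longleftrightarrow> (s, p, ob) \<in> triples G"
  unfolding shiftg_def by (force dest: shiftn_inj)

lemma shiftg_tfacts: "(shiftn K s, T) \<in> tfacts (shiftg K G) \<longleftrightarrow> (s, T) \<in> tfacts G"
  unfolding shiftg_def by (force dest: shiftn_inj)

lemma shiftg_lfacts: "shiftn K s \<in> lfacts (shiftg K G) \<longleftrightarrow> s \<in> lfacts G"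
  unfolding shiftg_def by (force dest: shiftn_inj)

lemma shiftg_has_type: "has_type (shiftg K G) (shiftn K s) S \<longleftrightarrow> has_type G s S"
  by (cases S) (auto simp: shiftg_tfacts shiftg_lfacts)

lemma shiftg_nodes: "nodes (shiftg K G) = shiftn K ` nodes G"
  unfolding nodes_def shiftg_def by (auto simp: image_iff) force+

lemma shiftg_solution:
  assumes "is_solution \<E> I G"
  shows "is_solution \<E> I (shiftg K G)"
proof -
  have wf: "wf_tgraph (preds \<E>) G" and sch: "sat_schema (delta \<E>) G"
    and tg: "\<forall>\<sigma> \<in> sttgds \<E>. sat_tgd (cons_interp \<E>) I G \<sigma>"
    using assms unfolding is_solution_def by auto
  have "wf_tgraph (preds \<E>) (shiftg K G)"
    using wf unfolding wf_tgraph_def shiftg_def by (fastforce simp: shiftn_lit)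
  moreover have "sat_schema (delta \<E>) (shiftg K G)"
    unfolding sat_schema_def
  proof (intro allI impI)
    fix T p S \<mu> n
    assume d: "delta \<E> T p = Some (S, \<mu>)" and nt: "(n, T) \<in> tfacts (shiftg K G)"
    then obtain n0 where n0: "n = shiftn K n0" "(n0, T) \<in> tfacts G"
      unfolding shiftg_def by auto
    have tr: "\<And>m. (n, p, m) \<in> triples (shiftg K G) \<Longrightarrow> \<exists>m0. m = shiftn K m0 \<and> (n0, p, m0) \<in> triples G"
      using n0(1) unfolding shiftg_def by (auto dest: shiftn_inj)
    have S0: "\<forall>m. (n0, p, m) \<in> triples G \<longrightarrow> has_type G m S"
     and M0: "\<mu> \<in> {MOne, MOpt} \<longrightarrow> (\<forall>m m'. (n0, p, m) \<in> triples G \<longrightarrow> (n0, p, m') \<in> triples G \<longrightarrow> m = m')"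
     and P0: "\<mu> \<in> {MOne, MPlus} \<longrightarrow> (\<exists>m. (n0, p, m) \<in> triples G)"
      using sch d n0(2) unfolding sat_schema_def by blast+
    show "(\<forall>m. (n, p, m) \<in> triples (shiftg K G) \<longrightarrow> has_type (shiftg K G) m S)
      \<and> (\<mu> \<in> {MOne, MOpt} \<longrightarrow> (\<forall>m m'. (n, p, m) \<in> triples (shiftg K G) \<longrightarrow> (n, p, m') \<in> triples (shiftg K G) \<longrightarrow> m = m'))
      \<and> (\<mu> \<in> {MOne, MPlus} \<longrightarrow> (\<exists>m. (n, p, m) \<in> triples (shiftg K G)))"
    proof (intro conjI allI impI)
      fix m assume "(n, p, m) \<in> triples (shiftg K G)"
      then obtain m0 where "m = shiftn K m0" "(n0, p, m0) \<in> triples G" using tr by blast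
      then show "has_type (shiftg K G) m S" using S0 shiftg_has_type by metis
    next
      fix m m' assume "\<mu> \<in> {MOne, MOpt}" "(n, p, m) \<in> triples (shiftg K G)" "(n, p, m') \<in> triples (shiftg K G)"
      then show "m = m'" using tr M0 by metis
    next
      assume "\<mu> \<in> {MOne, MPlus}"
      then obtain m where "(n0, p, m) \<in> triples G" using P0 by blast
      then show "\<exists>m. (n, p, m) \<in> triples (shiftg K G)" using n0(1) shiftg_triples by metis
    qed
  qed
  moreover have "\<forall>\<sigma> \<in> sttgds \<E>. sat_tgd (cons_interp \<E>) I (shiftg K G) \<sigma>"
  proof
    fix \<sigma> assume "\<sigma> \<in> sttgds \<E>"
    then have s: "sat_tgd (cons_interp \<E>) I G \<sigma>" using tg by blast
    have h: "hatom_holds F \<nu> G a \<Longrightarrow> hatom_holds F \<nu> (shiftg K G) a" for F \<nu> a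
      by (cases a) (metis hatom_holds.simps shiftn_eval shiftg_triples shiftg_tfacts shiftg_lfacts)+
    show "sat_tgd (cons_interp \<E>) I (shiftg K G) \<sigma>"
      using s h unfolding sat_tgd_def by blast
  qed
  ultimately show ?thesis unfolding is_solution_def by blast
qed

lemma sem_nodes: "(a, b) \<in> nre_sem E G \<Longrightarrow> a \<in> nodes G \<and> b \<in> nodes G"
proof (induction E arbitrary: a b)
  case NEps
  then show ?case by auto
next
  case (NPred p)
  then show ?case unfolding nodes_def by auto
next
  case NAny
  then show ?case unfolding nodes_def by auto
next
  case (NTest c)
  then show ?case by (auto split: if_splits)
next
  case (NNest E)
  then show ?case by auto
next
  case (NStar E)
  show ?case
  proof (cases "(a, b) \<in> Id_on (nodes G)")
    case True
    then show ?thesis by auto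
  next
    case False
    then have "(a, b) \<in> (nre_sem E G)\<^sup>+" using NStar by auto
    then show ?thesis using NStar.IH
      by (induction rule: trancl_induct) auto
  qed
next
  case (NSeq E1 E2)
  then show ?case by auto
next
  case (NAlt E1 E2)
  then show ?case by simp meson
qed

lemma simD:
  assumes "is_simulation Rel G H" "(x, y) \<in> Rel"
  shows "x \<in> nodes G" "y \<in> nodes H" "\<not> is_null x \<Longrightarrow> x = y"
    "(x, p, x') \<in> triples G \<Longrightarrow> \<exists>y'. (y, p, y') \<in> triples H \<and> (x', y') \<in> Rel"
  using assms unfolding is_simulation_def by (blast, blast, fast, fast)

lemma sim_sem:
  assumes sim: "is_simulation Rel G H"
  shows "(a, b) \<in> nre_sem E G \<Longrightarrow> (a, a') \<in> Rel \<Longrightarrow> \<exists>b'. (a', b') \<in> nre_sem E H \<and> (b, b') \<in> Rel"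
proof (induction E arbitrary: a b a')
  case NEps
  then have "b = a" by (auto elim: Id_onE)
  moreover have "a' \<in> nodes H" using simD(2)[OF sim NEps(2)] .
  ultimately show ?case using NEps(2) by auto
next
  case (NPred p)
  then have "(a, p, b) \<in> triples G" by simp
  then obtain y' where "(a', p, y') \<in> triples H" "(b, y') \<in> Rel" using simD(4)[OF sim NPred(2)] by blast
  then show ?case by auto
next
  case NAny
  then obtain p where "(a, p, b) \<in> triples G" by auto
  then obtain y' where "(a', p, y') \<in> triples H" "(b, y') \<in> Rel" using simD(4)[OF sim NAny(2)] by blast
  then show ?case by auto
next
  case (NTest c)
  then have ab: "a = const_node c" "b = const_node c" by (auto split: if_splits)
  have "\<not> is_null (const_node c)" by (cases c) auto
  then have "a' = a" "a' \<in> nodes H" using simD[OF sim NTest(2)] ab by auto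
  then show ?case using ab NTest(2) by auto
next
  case (NNest E)
  then obtain m where "b = a" "(a, m) \<in> nre_sem E G" by auto
  then obtain m' where "(a', m') \<in> nre_sem E H" using NNest.IH NNest.prems(2) by blast
  then show ?case using NNest \<open>b = a\<close> by auto
next
  case (NStar E)
  show ?case
  proof (cases "(a, b) \<in> Id_on (nodes G)")
    case True
    then have "b = a" by auto
    moreover have "a' \<in> nodes H" using simD(2)[OF sim NStar.prems(2)] .
    ultimately show ?thesis using NStar.prems(2) by auto
  next
    case False
    then have "(a, b) \<in> (nre_sem E G)\<^sup>+" using NStar by auto
    then have "\<exists>b'. (a', b') \<in> (nre_sem E H)\<^sup>+ \<and> (b, b') \<in> Rel"
    proof (induction rule: trancl_induct)
      case (base y)
      then show ?case using NStar.IH NStar.prems(2) by blast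
    next
      case (step y z)
      then obtain y' where "(a', y') \<in> (nre_sem E H)\<^sup>+" "(y, y') \<in> Rel" by blast
      moreover obtain z' where "(y', z') \<in> nre_sem E H" "(z, z') \<in> Rel"
        using NStar.IH step(2) calculation(2) by blast
      ultimately show ?case by (meson trancl.trancl_into_trancl)
    qed
    then show ?thesis by auto
  qed
next
  case (NSeq E1 E2)
  then obtain c where c: "(a, c) \<in> nre_sem E1 G" "(c, b) \<in> nre_sem E2 G" by auto
  then obtain c' where "(a', c') \<in> nre_sem E1 H" "(c, c') \<in> Rel" using NSeq.IH(1) NSeq.prems(2) by blast
  moreover obtain b' where "(c', b') \<in> nre_sem E2 H" "(b, b') \<in> Rel" using NSeq.IH(2) c(2) calculation(2) by blast
  ultimately show ?case by auto
next
  case (NAlt E1 E2)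
  then show ?case by simp meson
qed

theorem proposition4:
  fixes \<E> :: "('r, 'i, 'l, 'T, 'f, 'v) setting"
    and I :: "('r, 'l) rinstance"
    and E :: "('i, 'l) nre"
    and U :: "('i, 'l, 'T) tgraph"
    and n m :: "('i, 'l) node"
  assumes "wf_setting \<E>"
    and "consistent_setting \<E>"
    and "consistent_instance \<E> I"
    and "universal_sim_solution \<E> I U"
  shows "certain_answer \<E> I E n m \<longleftrightarrow> (n, m) \<in> nre_sem E U \<and> \<not> is_null n \<and> \<not> is_null m"
proof
  have solU: "is_solution \<E> I U" using assms(4) unfolding universal_sim_solution_def by blast
  assume ca: "certain_answer \<E> I E n m"
  have inU: "(n, m) \<in> nre_sem E U" using ca solU unfolding certain_answer_def by blast
  define K where "K = nidx n + nidx m + 1"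
  have "is_solution \<E> I (shiftg K U)" using shiftg_solution solU by blast
  then have "(n, m) \<in> nre_sem E (shiftg K U)" using ca unfolding certain_answer_def by blast
  then have nm: "n \<in> shiftn K ` nodes U" "m \<in> shiftn K ` nodes U"
    using sem_nodes shiftg_nodes by metis+
  have key: "\<And>x y. is_null y \<Longrightarrow> nidx y < K \<Longrightarrow> y \<noteq> shiftn K x"
    subgoal for x y by (cases x; cases y; auto)
    done
  have "\<not> is_null n" using key nm(1) unfolding K_def by fastforce
  moreover have "\<not> is_null m" using key nm(2) unfolding K_def by fastforce
  ultimately show "(n, m) \<in> nre_sem E U \<and> \<not> is_null n \<and> \<not> is_null m"
    using inU by blast
next
  assume r: "(n, m) \<in> nre_sem E U \<and> \<not> is_null n \<and> \<not> is_null m"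
  show "certain_answer \<E> I E n m"
    unfolding certain_answer_def
  proof (intro allI impI)
    fix J :: "('i, 'l, 'T) tgraph"
    assume "is_solution \<E> I J"
    then have "simulated_by U J" using assms(4) unfolding universal_sim_solution_def by blast
    then obtain Rel where sim: "is_simulation Rel U J" and tot: "\<forall>x \<in> nodes U. \<exists>y. (x, y) \<in> Rel"
      unfolding simulated_by_def by blast
    have "n \<in> nodes U" using r sem_nodes by metis
    then obtain n' where nn: "(n, n') \<in> Rel" using tot by blast
    moreover have "n' = n" using simD(3)[OF sim nn] r by auto
    ultimately obtain m' where "(n, m') \<in> nre_sem E J" "(m, m') \<in> Rel"
      using sim_sem[OF sim] r by blast
    moreover have "m' = m" using simD(3)[OF sim calculation(2)] r by auto
    ultimately show "(n, m) \<in> nre_sem E J" by simp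
  qed
qed

end
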